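(* Let $\mathbf S_1,\mathbf S_2\in\mathrm{Sym}(m;2)$ and $\mathbf G_j=\mathbf G_U(\mathbf S_j)\mathbf H_N$ for $j=1,2$, and put $\mathbf G=\mathbf G_1^\dagger\mathbf G_2$ and $r=\mathrm{rank}(\mathbf S_1+\mathbf S_2)$. Then every column of $\mathbf G$ has exactly $2^r$ nonzero entries, each of modulus $2^{-r/2}$, and for each column the set of row indices $\mathbf b_1\in\mathbb F_2^m$ of its nonzero entries is a coset of the subspace $H=\mathrm{rs}(\mathbf S_1+\mathbf S_2)$ (row space over $\mathbb F_2$) in $\mathbb F_2^m$.
   Context: Fix $m\ge1$, $N=2^m$. $\mathrm{Sym}(m;2)$ is the set of symmetric binary $m\times m$ matrices; addition and rank are over $\mathbb F_2$. The standard basis of $\mathbb C^N=(\mathbb C^2)^{\otimes m}$ is $\{\mathbf e_{\mathbf v}=\mathbf e_{v_1}\otimes\cdots\otimes\mathbf e_{v_m}:\mathbf v\in\mathbb F_2^m\}$ and matrices on $\mathbb C^N$ are indexed by $\mathbb F_2^m\times\mathbb F_2^m$; $\dagger$ is conjugate transpose. $\mathbf G_U(\mathbf S)=\mathrm{diag}(i^{\mathbf v^T\mathbf S\mathbf v})_{\mathbf v\in\mathbb F_2^m}$, where $\mathbf v^T\mathbf S\mathbf v$ is computed in $\mathbb Z$ after lifting binary entries to $0,1$. $\mathbf H_N=\mathbf H_2^{\otimes m}=2^{-m/2}[(-1)^{\mathbf v^T\mathbf w}]_{\mathbf v,\mathbf w\in\mathbb F_2^m}$ with $\mathbf H_2=\frac1{\sqrt2}\begin{pmatrix}1&1\\1&-1\end{pmatrix}$.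 (The columns of $\mathbf G_U(\mathbf S)\mathbf H_N$ are the binary chirps with symmetric matrix $\mathbf S$.) *)

theory Defs
  imports "HOL-Analysis.Analysis" "HOL-Library.Z2"
begin

text \<open>F_2 is the field type bit; F_2^m is bit^'n with CARD('n) = m.\<close>

instance bit :: finite
proof
  have "(UNIV :: bit set) = {0, 1}" by (auto intro: bit.exhaust)
  then show "finite (UNIV :: bit set)" by (metis finite.emptyI finite.insertI)
qed

definition lift :: "bit \<Rightarrow> nat" where "lift b = of_bit b"

text \<open>v^T S v computed in Z (here in nat, all terms nonnegative) after lifting.\<close>
definition qform :: "bit^'n^'n \<Rightarrow> bit^'n \<Rightarrow> nat" where
  "qform S v = (\<Sum>i\<in>UNIV. \<Sum>j\<in>UNIV. lift (v$i) * lift (S$i$j) * lift (v$j))"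

definition GU :: "bit^'n^'n \<Rightarrow> complex^(bit^'n)^(bit^'n)" where
  "GU S = (\<chi> v w. if v = w then \<i> ^ qform S v else 0)"

definition HN :: "complex^(bit^'n)^(bit^'n)" where
  "HN = (\<chi> v w. complex_of_real (2 powr (- real CARD('n) / 2)) *
                 (-1) ^ (\<Sum>i\<in>UNIV. lift (v$i) * lift (w$i)))"

definition dagger :: "complex^'m^'k \<Rightarrow> complex^'k^'m" where
  "dagger A = (\<chi> i j. cnj (A$j$i))"

end

theory Submission
  imports Defs
begin



definition eps :: "bit \<Rightarrow> complex" where "eps b = (if b = 0 then 1 else -1)"

lemma lift_simps[simp]: "lift 0 = 0" "lift 1 = 1"
  by (simp_all add: lift_def)

lemma bit_cases2: "(b::bit) = 0 \<or> b = 1" by (cases b) auto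

lemma eps_add: "eps (a + b) = eps a * eps b"
  by (cases a; cases b) (simp_all add: eps_def)

lemma eps_plus1: "eps (b + 1) = - eps b" by (cases b) (simp_all add: eps_def)
lemma eps_sq: "eps a * eps a = 1" by (cases a) (simp_all add: eps_def)
lemma cnj_eps[simp]: "cnj (eps a) = eps a" by (simp add: eps_def)
lemma eps_0[simp]: "eps 0 = 1" and eps_1[simp]: "eps 1 = -1" by (simp_all add: eps_def)
lemma norm_eps[simp]: "norm (eps a) = 1" by (simp add: eps_def)

lemma of_nat_lift[simp]: "(of_nat (lift b) :: bit) = b"
  by (cases b) simp_all

lemma minus1_pow: "(-1::complex) ^ n = eps (of_nat n)"
proof (induction n)
  case 0 then show ?case by simp
next
  case (Suc n) then show ?case by (simp add: eps_add)
qed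

definition dot :: "bit^'n \<Rightarrow> bit^'n \<Rightarrow> bit" where "dot v w = (\<Sum>i\<in>UNIV. v$i * w$i)"

lemma dot_comm: "dot v w = dot w v" unfolding dot_def by (simp only: mult.commute)
lemma dot_add_left: "dot (u + v) w = dot u w + dot v w"
  unfolding dot_def by (simp only: vector_add_component distrib_right sum.distrib)
lemma dot_add_right: "dot w (u + v) = dot w u + dot w v"
  unfolding dot_def by (simp only: vector_add_component distrib_left sum.distrib)
lemma dot_zero[simp]: "dot 0 w = 0" "dot w 0 = 0" by (simp_all add: dot_def)

lemma HN_eps: "(HN :: complex^(bit^'n)^(bit^'n))$v$w = complex_of_real (2 powr (- real CARD('n) / 2)) * eps (dot v w)"
  by (simp add: HN_def minus1_pow dot_def)

lemma bit_add_self[simp]: "(x::bit) + x = 0" by (cases x) simp_all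
lemma vec_add_self[simp]: "(x::bit^'n) + x = 0" by (simp add: vec_eq_iff)

lemma char_sum_sub:
  fixes W :: "(bit^'n) set"
  assumes add: "\<And>u v. u \<in> W \<Longrightarrow> v \<in> W \<Longrightarrow> u + v \<in> W"
  shows "(\<Sum>u\<in>W. eps (dot u y)) = (if (\<forall>u\<in>W. dot u y = 0) then of_nat (card W) else 0)"
proof (cases "\<forall>u\<in>W. dot u y = 0")
  case True then show ?thesis by simp
next
  case False
  then obtain u0 where u0: "u0 \<in> W" "dot u0 y = 1" by auto
  have bij: "bij_betw (\<lambda>u. u + u0) W W"
    by (rule bij_betwI[where g="\<lambda>u. u + u0"]) (auto simp: add u0 add.assoc)
  have "(\<Sum>u\<in>W. eps (dot u y)) = (\<Sum>u\<in>W. eps (dot (u + u0) y))"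
    using sum.reindex_bij_betw[OF bij, of "\<lambda>u. eps (dot u y)"] by simp
  also have "\<dots> = - (\<Sum>u\<in>W. eps (dot u y))"
    by (simp only: dot_add_left u0(2) eps_plus1 sum_negf)
  finally have "(\<Sum>u\<in>W. eps (dot u y)) = 0" by simp
  then show ?thesis by (simp only: if_not_P[OF False])
qed

lemma card_bit[simp]: "CARD(bit) = 2"
proof -
  have "(UNIV :: bit set) = {0, 1}" using bit_cases2 by auto
  then have "CARD(bit) = card {0::bit, 1}" by (rule arg_cong)
  then show ?thesis by simp
qed

lemma card_vec_bit: "card (UNIV :: (bit^'n) set) = 2 ^ CARD('n)"
  by simp

lemma char_sum_univ:
  "(\<Sum>u\<in>(UNIV::(bit^'n) set). eps (dot u y)) = (if y = 0 then 2 ^ CARD('n) else 0)"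
proof -
  have "(\<forall>u::bit^'n. dot u y = 0) \<longleftrightarrow> y = 0"
  proof
    assume h: "\<forall>u::bit^'n. dot u y = 0"
    show "y = 0"
    proof (subst vec_eq_iff, intro allI)
      fix i
      have "dot (axis i 1) y = y $ i"
        unfolding dot_def axis_def by (simp add: sum.delta if_distrib[of "\<lambda>x. x * _"] del: mult_bit_eq_and cong: if_cong)
      then show "y $ i = 0 $ i" using h by simp
    qed
  qed simp
  then show ?thesis using char_sum_sub[of UNIV y] by (simp add: card_vec_bit)
qed




definition bil :: "bit^'n^'n \<Rightarrow> bit^'n \<Rightarrow> bit^'n \<Rightarrow> nat" where
  "bil S v w = (\<Sum>i\<in>UNIV. \<Sum>j\<in>UNIV. lift (v$i) * lift (S$i$j) * lift (w$j))"

lemma lift_add_int: "int (lift (a + b)) = int (lift a) + int (lift b) - 2 * int (lift a) * int (lift b)"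
  by (cases a; cases b) simp_all

lemma i_pow_mod4: "\<i> ^ n = \<i> ^ (n mod 4)"
proof -
  have "\<i> ^ n = \<i> ^ (4 * (n div 4) + n mod 4)" by simp
  also have "\<dots> = (\<i> ^ 4) ^ (n div 4) * \<i> ^ (n mod 4)" by (simp only: power_add power_mult)
  also have "\<i> ^ 4 = (1::complex)" by (simp add: power4_eq_xxxx)
  finally show ?thesis by simp
qed

lemma i_pow_cong4:
  assumes "int a = int b + 4 * k"
  shows "\<i> ^ a = \<i> ^ b"
proof -
  have "int a mod 4 = int b mod 4" using assms by simp
  then have "a mod 4 = b mod 4" by (metis of_nat_eq_iff zmod_int of_nat_numeral)
  then show ?thesis by (metis i_pow_mod4)
qed

lemma qform_add_int:
  fixes S :: "bit^'n^'n"
  assumes sym: "transpose S = S"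
  shows "\<exists>k. int (qform S (v + w)) = int (qform S v) + int (qform S w) + 2 * int (bil S v w) + 4 * k"
proof -
  define x where "x i = int (lift (v$i))" for i
  define y where "y i = int (lift (w$i))" for i
  define s where "s i j = int (lift (S$i$j))" for i j
  have sij: "s i j = s j i" for i j
  proof -
    have "S$i$j = transpose S $ i $ j" using sym by simp
    also have "\<dots> = S$j$i" by (simp add: transpose_def)
    finally show ?thesis by (simp add: s_def)
  qed
  have X: "int (lift ((v + w)$i)) = x i + y i - 2 * x i * y i" for i
    unfolding x_def y_def vector_add_component by (rule lift_add_int)
  have q: "int (qform S u) = (\<Sum>i\<in>UNIV. \<Sum>j\<in>UNIV. int (lift (u$i)) * s i j * int (lift (u$j)))" for u
    by (simp add: qform_def s_def)
  have b: "int (bil S v w) = (\<Sum>i\<in>UNIV. \<Sum>j\<in>UNIV. x i * s i j * y j)"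
    by (simp add: bil_def s_def x_def y_def)
  have swap1: "(\<Sum>i\<in>UNIV. \<Sum>j\<in>UNIV. y i * s i j * x j) = (\<Sum>i\<in>UNIV. \<Sum>j\<in>UNIV. x i * s i j * y j)"
    by (subst sum.swap) (simp add: sij mult.commute mult.left_commute)
  have swap2: "(\<Sum>i\<in>UNIV. \<Sum>j\<in>UNIV. (x i + y i) * s i j * (x j * y j)) = (\<Sum>i\<in>UNIV. \<Sum>j\<in>UNIV. (x i * y i) * s i j * (x j + y j))"
    by (subst sum.swap) (simp add: sij mult.commute mult.left_commute)
  define k where "k = (\<Sum>i\<in>UNIV. \<Sum>j\<in>UNIV. (x i * y i) * s i j * (x j * y j)) - (\<Sum>i\<in>UNIV. \<Sum>j\<in>UNIV. (x i * y i) * s i j * (x j + y j))"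
  have trm: "(x i + y i - 2 * x i * y i) * s i j * (x j + y j - 2 * x j * y j) =
      x i * s i j * x j + y i * s i j * y j + x i * s i j * y j + y i * s i j * x j
      - 2 * ((x i * y i) * s i j * (x j + y j)) - 2 * ((x i + y i) * s i j * (x j * y j))
      + 4 * ((x i * y i) * s i j * (x j * y j))" for i j
    by (simp add: algebra_simps)
  have "int (qform S (v + w)) = (\<Sum>i\<in>UNIV. \<Sum>j\<in>UNIV. (x i + y i - 2 * x i * y i) * s i j * (x j + y j - 2 * x j * y j))"
    by (simp only: q X)
  also have "\<dots> = (\<Sum>i\<in>UNIV. \<Sum>j\<in>UNIV. x i * s i j * x j) + (\<Sum>i\<in>UNIV. \<Sum>j\<in>UNIV. y i * s i j * y j)
      + (\<Sum>i\<in>UNIV. \<Sum>j\<in>UNIV. x i * s i j * y j) + (\<Sum>i\<in>UNIV. \<Sum>j\<in>UNIV. y i * s i j * x j)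
      - 2 * (\<Sum>i\<in>UNIV. \<Sum>j\<in>UNIV. (x i * y i) * s i j * (x j + y j))
      - 2 * (\<Sum>i\<in>UNIV. \<Sum>j\<in>UNIV. (x i + y i) * s i j * (x j * y j))
      + 4 * (\<Sum>i\<in>UNIV. \<Sum>j\<in>UNIV. (x i * y i) * s i j * (x j * y j))"
    by (simp only: trm sum.distrib sum_subtractf sum_distrib_left)
  also have "\<dots> = int (qform S v) + int (qform S w) + 2 * int (bil S v w) + 4 * k"
    by (simp only: swap1 swap2 b q x_def[symmetric] y_def[symmetric] k_def) (simp add: algebra_simps)
  finally show ?thesis by blast
qed

definition bbil :: "bit^'n^'n \<Rightarrow> bit^'n \<Rightarrow> bit^'n \<Rightarrow> bit" where
  "bbil S v w = (\<Sum>i\<in>UNIV. \<Sum>j\<in>UNIV. v$i * S$i$j * w$j)"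

lemma of_nat_bil: "(of_nat (bil S v w) :: bit) = bbil S v w"
  by (simp add: bil_def bbil_def of_nat_sum del: mult_bit_eq_and)

lemma qform_add:
  fixes S :: "bit^'n^'n"
  assumes sym: "transpose S = S"
  shows "\<i> ^ qform S (v + w) = \<i> ^ qform S v * \<i> ^ qform S w * eps (bbil S v w)"
proof -
  obtain k where k: "int (qform S (v + w)) = int (qform S v) + int (qform S w) + 2 * int (bil S v w) + 4 * k"
    using qform_add_int[OF sym] by blast
  have "int (qform S (v + w)) = int (qform S v + qform S w + 2 * bil S v w) + 4 * k"
    using k by simp
  then have "\<i> ^ qform S (v + w) = \<i> ^ (qform S v + qform S w + 2 * bil S v w)"
    by (rule i_pow_cong4)
  also have "\<dots> = \<i> ^ qform S v * \<i> ^ qform S w * (-1) ^ bil S v w"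
    by (simp add: power_add power_mult)
  finally show ?thesis by (simp add: minus1_pow of_nat_bil)
qed




lemma bit_scale_cases: "(k::bit) *s x = 0 \<or> k *s x = x"
  by (cases k) auto

lemma card_span_indep:
  fixes B :: "(bit^'n) set"
  shows "finite B \<Longrightarrow> vec.independent B \<Longrightarrow> card (vec.span B) = 2 ^ card B"
proof (induction B rule: finite_induct)
  case empty then show ?case by simp
next
  case (insert b B)
  have indB: "vec.independent B" and nb: "b \<notin> vec.span B"
    using insert.prems insert.hyps(2) vec.independent_insert[of b B] by simp_all
  have IH: "card (vec.span B) = 2 ^ card B" using insert.IH indB by simp
  have eq: "vec.span (insert b B) = vec.span B \<union> (\<lambda>x. b + x) ` vec.span B"
  proof
    show "vec.span (insert b B) \<subseteq> vec.span B \<union> (\<lambda>x. b + x) ` vec.span B"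
    proof
      fix x assume "x \<in> vec.span (insert b B)"
      then obtain k where k: "x - k *s b \<in> vec.span B" unfolding vec.span_insert by auto
      show "x \<in> vec.span B \<union> (\<lambda>x. b + x) ` vec.span B"
      proof (cases "k *s b = 0")
        case True then show ?thesis using k unfolding True diff_zero by blast
      next
        case False
        then have "k *s b = b" using bit_scale_cases by metis
        then have "x - b \<in> vec.span B" using k by simp
        moreover have "x = b + (x - b)" by simp
        ultimately show ?thesis by blast
      qed
    qed
  next
    show "vec.span B \<union> (\<lambda>x. b + x) ` vec.span B \<subseteq> vec.span (insert b B)"
    proof -
      have "vec.span B \<subseteq> vec.span (insert b B)" by (rule vec.span_mono) auto
      moreover have "(\<lambda>x. b + x) ` vec.span B \<subseteq> vec.span (insert b B)"
      proof
        fix y assume "y \<in> (\<lambda>x. b + x) ` vec.span B"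
        then obtain x where x: "x \<in> vec.span B" "y = b + x" by auto
        have "b \<in> vec.span (insert b B)" by (rule vec.span_base) simp
        moreover have "x \<in> vec.span (insert b B)" using x(1) \<open>vec.span B \<subseteq> _\<close> by auto
        ultimately show "y \<in> vec.span (insert b B)" using x(2) vec.span_add by blast
      qed
      ultimately show ?thesis by blast
    qed
  qed
  have disj: "vec.span B \<inter> (\<lambda>x. b + x) ` vec.span B = {}"
  proof (rule ccontr)
    assume "vec.span B \<inter> (\<lambda>x. b + x) ` vec.span B \<noteq> {}"
    then obtain x where x: "x \<in> vec.span B" "b + x \<in> vec.span B" by auto
    then have "(b + x) - x \<in> vec.span B" using vec.span_diff by blast
    then show False using nb by simp
  qed
  have "card (vec.span (insert b B)) = card (vec.span B) + card ((\<lambda>x. b + x) ` vec.span B)"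
    unfolding eq by (rule card_Un_disjoint) (use disj in auto)
  also have "card ((\<lambda>x. b + x) ` vec.span B) = card (vec.span B)"
    by (rule card_image) (simp add: inj_on_def)
  finally show ?case using IH insert.hyps by simp
qed

lemma card_span_dim:
  fixes X :: "(bit^'n) set"
  shows "card (vec.span X) = 2 ^ vec.dim X"
proof -
  obtain B where B: "B \<subseteq> X" "vec.independent B" "X \<subseteq> vec.span B" "card B = vec.dim X"
    using vec.basis_exists by blast
  have "vec.span B = vec.span X"
    using B vec.span_mono vec.span_minimal[OF B(3) vec.subspace_span] by blast
  then show ?thesis using card_span_indep[of B] B by simp
qed

definition perp :: "(bit^'n) set \<Rightarrow> (bit^'n) set" where
  "perp W = {y. \<forall>u\<in>W. dot u y = 0}"

lemma sum_if_const: "(\<Sum>y\<in>(UNIV::'a::finite set). if P y then (a::complex) else 0) = of_nat (card {y. P y}) * a"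
  by (simp add: sum.If_cases)

lemma card_perp:
  fixes W :: "(bit^'n) set"
  assumes z: "0 \<in> W" and add: "\<And>u v. u \<in> W \<Longrightarrow> v \<in> W \<Longrightarrow> u + v \<in> W"
  shows "card W * card (perp W) = 2 ^ CARD('n)"
proof -
  have "(\<Sum>y\<in>UNIV. \<Sum>u\<in>W. eps (dot u y)) = (\<Sum>u\<in>W. \<Sum>y\<in>UNIV. eps (dot y u))"
    by (subst sum.swap) (simp add: dot_comm)
  also have "\<dots> = (\<Sum>u\<in>W. if u = 0 then 2 ^ CARD('n) else 0)"
    by (simp add: char_sum_univ)
  also have "\<dots> = 2 ^ CARD('n)"
    using z by (simp add: sum.delta)
  finally have 1: "(\<Sum>y\<in>UNIV. \<Sum>u\<in>W. eps (dot u y)) = 2 ^ CARD('n)" .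
  have "(\<Sum>y\<in>UNIV. \<Sum>u\<in>W. eps (dot u y)) = (\<Sum>y\<in>UNIV. if y \<in> perp W then of_nat (card W) else 0)"
    by (simp add: char_sum_sub[OF add] perp_def)
  also have "\<dots> = of_nat (card (perp W)) * of_nat (card W)"
    by (subst sum_if_const) simp
  finally have "of_nat (card W * card (perp W)) = (of_nat (2 ^ CARD('n)) :: complex)"
    using 1 by (simp add: mult.commute)
  then show ?thesis by (simp only: of_nat_eq_iff)
qed




lemma mv_dot_row: "(S *v u) $ i = dot (row i S) u"
  by (simp add: matrix_vector_mult_def dot_def row_def del: mult_bit_eq_and)

lemma dot_scale: "dot (c *s y) u = c * dot y u"
  by (simp add: dot_def sum_distrib_left mult.assoc del: mult_bit_eq_and)

lemma kernel_perp:
  fixes S :: "bit^'n^'n"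
  shows "{u. S *v u = 0} = perp (vec.span (rows S))"
proof (intro set_eqI iffI)
  fix u assume "u \<in> {u. S *v u = 0}"
  then have h: "S *v u = 0" by simp
  have sub: "vec.subspace {y. dot y u = 0}"
    unfolding vec.subspace_def by (simp add: dot_add_left dot_scale)
  have "rows S \<subseteq> {y. dot y u = 0}"
    using h by (auto simp: rows_def mv_dot_row[symmetric])
  then have "vec.span (rows S) \<subseteq> {y. dot y u = 0}" using vec.span_minimal sub by blast
  then show "u \<in> perp (vec.span (rows S))" by (auto simp: perp_def)
next
  fix u assume "u \<in> perp (vec.span (rows S))"
  then have "\<forall>i. dot (row i S) u = 0"
    by (auto simp: perp_def rows_def intro: vec.span_base)
  then show "u \<in> {u. S *v u = 0}" by (simp add: vec_eq_iff mv_dot_row)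
qed

lemma perp_add: "u \<in> perp W \<Longrightarrow> v \<in> perp W \<Longrightarrow> u + v \<in> perp W"
  by (simp add: perp_def dot_add_right)

lemma perp_zero: "0 \<in> perp W" by (simp add: perp_def)

lemma perp_kernel:
  fixes S :: "bit^'n^'n"
  shows "perp {u. S *v u = 0} = vec.span (rows S)"
proof -
  let ?H = "vec.span (rows S)"
  let ?K = "{u. S *v u = 0}"
  have K: "?K = perp ?H" by (rule kernel_perp)
  have c1: "card ?H * card ?K = 2 ^ CARD('n)"
    unfolding K by (rule card_perp) (auto intro: vec.span_zero vec.span_add)
  have c2: "card ?K * card (perp ?K) = 2 ^ CARD('n)"
    unfolding K by (rule card_perp) (auto intro: perp_zero perp_add)
  have pos: "card ?K > 0" using c1 by (metis mult_is_0 nat.simps(3) neq0_conv power_eq_0_iff zero_neq_numeral)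
  have "card ?H = card (perp ?K)" using c1 c2 pos by (metis mult.commute mult_right_cancel neq0_conv)
  moreover have "?H \<subseteq> perp ?K" unfolding K perp_def by (auto simp: dot_comm)
  ultimately show ?thesis by (metis card_subset_eq finite)
qed




lemma bbil_add: "bbil S1 v u + bbil S2 v u = bbil (S1 + S2) v u"
  by (simp add: bbil_def sum.distrib[symmetric] distrib_left distrib_right del: mult_bit_eq_and add_bit_eq_xor)

lemma bbil_dot: "bbil S v u = dot v (S *v u)"
  by (simp add: bbil_def dot_def matrix_vector_mult_def sum_distrib_left mult.assoc del: mult_bit_eq_and add_bit_eq_xor)

definition chi :: "bit^'n^'n \<Rightarrow> bit^'n^'n \<Rightarrow> bit^'n \<Rightarrow> complex" where
  "chi S1 S2 v = cnj (\<i> ^ qform S1 v) * \<i> ^ qform S2 v"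

lemma chi_add:
  assumes "transpose S1 = S1" "transpose S2 = S2"
  shows "chi S1 S2 (v + u) = chi S1 S2 v * chi S1 S2 u * eps (dot v ((S1 + S2) *v u))"
proof -
  have "chi S1 S2 (v + u) = (cnj (\<i> ^ qform S1 v) * cnj (\<i> ^ qform S1 u) * eps (bbil S1 v u)) *
        (\<i> ^ qform S2 v * \<i> ^ qform S2 u * eps (bbil S2 v u))"
    unfolding chi_def qform_add[OF assms(1)] qform_add[OF assms(2)] by simp
  also have "\<dots> = chi S1 S2 v * chi S1 S2 u * (eps (bbil S1 v u) * eps (bbil S2 v u))"
    by (simp add: chi_def algebra_simps)
  also have "eps (bbil S1 v u) * eps (bbil S2 v u) = eps (dot v ((S1 + S2) *v u))"
    by (simp only: eps_add[symmetric] bbil_add) (simp only: bbil_dot)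
  finally show ?thesis .
qed

lemma norm_chi[simp]: "norm (chi S1 S2 v) = 1"
  by (simp add: chi_def norm_mult norm_power)

lemma chi_cnj: "chi S1 S2 v * cnj (chi S1 S2 v) = 1"
proof -
  have "chi S1 S2 v * cnj (chi S1 S2 v) = complex_of_real ((norm (chi S1 S2 v))^2)"
    by (rule complex_norm_square[symmetric, unfolded]) 
  then show ?thesis by simp
qed

lemma chi_0[simp]: "chi S1 S2 0 = 1"
  by (simp add: chi_def qform_def)




lemma sum_shift: "(\<Sum>w\<in>(UNIV::(bit^'n) set). f w) = (\<Sum>u\<in>UNIV. f (v + u))"
proof -
  have "bij_betw (\<lambda>u. v + u) (UNIV::(bit^'n) set) UNIV"
    by (rule bij_betwI[where g="\<lambda>u. v + u"]) (auto simp: add.assoc[symmetric])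
  from sum.reindex_bij_betw[OF this, of f] show ?thesis by simp
qed

definition T :: "bit^'n^'n \<Rightarrow> bit^'n^'n \<Rightarrow> bit^'n \<Rightarrow> complex" where
  "T S1 S2 c = (\<Sum>v\<in>UNIV. chi S1 S2 v * eps (dot v c))"

lemma T_shift:
  assumes "transpose S1 = S1" "transpose S2 = S2" and u: "(S1 + S2) *v u = 0"
  shows "T S1 S2 c = chi S1 S2 u * eps (dot u c) * T S1 S2 c"
proof -
  have "T S1 S2 c = (\<Sum>v\<in>UNIV. chi S1 S2 (u + v) * eps (dot (u + v) c))"
    unfolding T_def by (rule sum_shift)
  also have "\<dots> = (\<Sum>v\<in>UNIV. chi S1 S2 u * eps (dot u c) * (chi S1 S2 v * eps (dot v c)))"
  proof (rule sum.cong[OF refl])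
    fix v
    have "chi S1 S2 (u + v) * eps (dot (u + v) c) = chi S1 S2 v * chi S1 S2 u * eps (dot v ((S1 + S2) *v u)) * (eps (dot v c) * eps (dot u c))"
      by (simp only: add.commute[of u v] chi_add[OF assms(1,2)] dot_add_left eps_add)
    also have "\<dots> = chi S1 S2 u * eps (dot u c) * (chi S1 S2 v * eps (dot v c))"
      by (simp only: u dot_zero eps_0 mult_1_right) (simp only: mult_ac)
    finally show "chi S1 S2 (u + v) * eps (dot (u + v) c) = chi S1 S2 u * eps (dot u c) * (chi S1 S2 v * eps (dot v c))" .
  qed
  also have "\<dots> = chi S1 S2 u * eps (dot u c) * T S1 S2 c"
    by (simp add: T_def sum_distrib_left)
  finally show ?thesis .
qed

lemma T_nonzero_chi:
  assumes "transpose S1 = S1" "transpose S2 = S2" and u: "(S1 + S2) *v u = 0"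
    and nz: "T S1 S2 c \<noteq> 0"
  shows "chi S1 S2 u = eps (dot u c)"
proof -
  have "chi S1 S2 u * eps (dot u c) = 1" using T_shift[OF assms(1-3), of c] nz by simp
  then have "chi S1 S2 u * eps (dot u c) * eps (dot u c) = eps (dot u c)" by simp
  then show ?thesis by (simp add: mult.assoc eps_sq)
qed

lemma term_aux: "cnj b = b \<Longrightarrow> cnj e = e \<Longrightarrow> cnj f = f \<Longrightarrow>
   x * e * cnj (x * y * b * (e * f)) = (x * cnj x) * (e * e) * (cnj y * b * f)"
  by (simp add: algebra_simps)

lemma T_normsq:
  fixes S1 S2 :: "bit^'n^'n"
  assumes "transpose S1 = S1" "transpose S2 = S2"
  shows "T S1 S2 c * cnj (T S1 S2 c) = 2 ^ CARD('n) *
     (\<Sum>u\<in>{u. (S1 + S2) *v u = 0}. eps (dot u c) * cnj (chi S1 S2 u))"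
proof -
  let ?S = "S1 + S2"
  have "T S1 S2 c * cnj (T S1 S2 c) = (\<Sum>v\<in>UNIV. \<Sum>w\<in>UNIV. (chi S1 S2 v * eps (dot v c)) * cnj (chi S1 S2 w * eps (dot w c)))"
    unfolding T_def by (simp add: sum_product cnj_sum)
  also have "\<dots> = (\<Sum>v\<in>UNIV. \<Sum>u\<in>UNIV. (chi S1 S2 v * eps (dot v c)) * cnj (chi S1 S2 (v + u) * eps (dot (v + u) c)))"
    by (rule sum.cong[OF refl], rule sum_shift)
  also have "\<dots> = (\<Sum>v\<in>UNIV. \<Sum>u\<in>UNIV. cnj (chi S1 S2 u) * eps (dot u c) * eps (dot v (?S *v u)))"
  proof (intro sum.cong refl)
    fix v u
    have "(chi S1 S2 v * eps (dot v c)) * cnj (chi S1 S2 (v + u) * eps (dot (v + u) c))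
       = chi S1 S2 v * eps (dot v c) * cnj (chi S1 S2 v * chi S1 S2 u * eps (dot v (?S *v u)) * (eps (dot v c) * eps (dot u c)))"
      by (simp only: chi_add[OF assms] dot_add_left eps_add)
    also have "\<dots> = (chi S1 S2 v * cnj (chi S1 S2 v)) * (eps (dot v c) * eps (dot v c)) * (cnj (chi S1 S2 u) * eps (dot v (?S *v u)) * eps (dot u c))"
      by (rule term_aux) simp_all
    also have "\<dots> = cnj (chi S1 S2 u) * eps (dot u c) * eps (dot v (?S *v u))"
      by (simp add: chi_cnj eps_sq)
    finally show "(chi S1 S2 v * eps (dot v c)) * cnj (chi S1 S2 (v + u) * eps (dot (v + u) c)) = cnj (chi S1 S2 u) * eps (dot u c) * eps (dot v (?S *v u))" .
  qed
  also have "\<dots> = (\<Sum>u\<in>UNIV. cnj (chi S1 S2 u) * eps (dot u c) * (\<Sum>v\<in>UNIV. eps (dot v (?S *v u))))"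
    by (subst sum.swap) (simp add: sum_distrib_left)
  also have "\<dots> = (\<Sum>u\<in>UNIV. if ?S *v u = 0 then 2 ^ CARD('n) * (eps (dot u c) * cnj (chi S1 S2 u)) else 0)"
    by (intro sum.cong refl) (simp add: char_sum_univ)
  also have "\<dots> = (\<Sum>u\<in>{u. ?S *v u = 0}. 2 ^ CARD('n) * (eps (dot u c) * cnj (chi S1 S2 u)))"
    by (simp add: sum.If_cases)
  also have "\<dots> = 2 ^ CARD('n) * (\<Sum>u\<in>{u. ?S *v u = 0}. eps (dot u c) * cnj (chi S1 S2 u))"
    by (simp add: sum_distrib_left)
  finally show ?thesis .
qed

lemma T_sum: fixes S1 S2 :: "bit^'n^'n" shows "(\<Sum>c\<in>UNIV. T S1 S2 c) = 2 ^ CARD('n)"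
proof -
  have "(\<Sum>c\<in>UNIV. T S1 S2 c) = (\<Sum>v\<in>UNIV. chi S1 S2 v * (\<Sum>c\<in>UNIV. eps (dot c v)))"
    unfolding T_def by (subst sum.swap) (simp add: sum_distrib_left dot_comm)
  also have "\<dots> = (\<Sum>v\<in>UNIV. chi S1 S2 v * (if v = 0 then 2 ^ CARD('n) else 0))"
    by (simp only: char_sum_univ)
  also have "\<dots> = (\<Sum>v\<in>UNIV. if v = 0 then chi S1 S2 v * 2 ^ CARD('n) else 0)"
    by (intro sum.cong refl) simp
  finally show ?thesis by simp
qed

lemma T_exists: "\<exists>c0. T S1 S2 c0 \<noteq> 0"
proof (rule ccontr)
  assume "\<not> ?thesis"
  then have "(\<Sum>c\<in>UNIV. T S1 S2 c) = 0" by simp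
  then show False using T_sum[of S1 S2] by simp
qed

lemma T_normsq2:
  fixes S1 S2 :: "bit^'n^'n"
  assumes "transpose S1 = S1" "transpose S2 = S2" and nz: "T S1 S2 c0 \<noteq> 0"
  shows "T S1 S2 c * cnj (T S1 S2 c) = 2 ^ CARD('n) *
     (if c + c0 \<in> perp {u. (S1 + S2) *v u = 0} then of_nat (card {u. (S1 + S2) *v u = 0}) else 0)"
proof -
  let ?K = "{u. (S1 + S2) *v u = 0}"
  have "(\<Sum>u\<in>?K. eps (dot u c) * cnj (chi S1 S2 u)) = (\<Sum>u\<in>?K. eps (dot u (c + c0)))"
  proof (rule sum.cong[OF refl])
    fix u assume "u \<in> ?K"
    then have "(S1 + S2) *v u = 0" by simp
    then have "chi S1 S2 u = eps (dot u c0)" by (rule T_nonzero_chi[OF assms(1,2) _ nz])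
    then show "eps (dot u c) * cnj (chi S1 S2 u) = eps (dot u (c + c0))"
      by (simp only: cnj_eps dot_add_right eps_add)
  qed
  also have "\<dots> = (if c + c0 \<in> perp ?K then of_nat (card ?K) else 0)"
    by (subst char_sum_sub) (auto simp: perp_def matrix_vector_right_distrib)
  finally show ?thesis using T_normsq[OF assms(1,2), of c] by simp
qed




lemma GUHN_entry: "(GU S ** HN :: complex^(bit^'n)^(bit^'n))$v$w = \<i> ^ qform S v * HN$v$w"
  by (simp add: matrix_matrix_mult_def GU_def if_distrib[of "\<lambda>x. x * _"] sum.delta cong: if_cong)

lemma mm_entry: "(A ** B)$i$j = (\<Sum>k\<in>UNIV. A$i$k * B$k$j)"
  by (simp add: matrix_matrix_mult_def)

lemma G_entry:
  fixes S1 S2 :: "bit^'n^'n"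
  shows "(dagger (GU S1 ** HN) ** (GU S2 ** HN) :: complex^(bit^'n)^(bit^'n))$b1$b2
     = complex_of_real (2 powr (- real CARD('n))) * T S1 S2 (b1 + b2)"
proof -
  define c where "c = complex_of_real (2 powr (- real CARD('n) / 2))"
  have cc: "c * c = complex_of_real (2 powr (- real CARD('n)))"
    unfolding c_def of_real_mult[symmetric] powr_add[symmetric] by simp
  have "(dagger (GU S1 ** HN) ** (GU S2 ** HN) :: complex^(bit^'n)^(bit^'n))$b1$b2
     = (\<Sum>v\<in>UNIV. cnj (\<i> ^ qform S1 v * (c * eps (dot v b1))) * (\<i> ^ qform S2 v * (c * eps (dot v b2))))"
    apply (subst mm_entry)
    apply (simp only: dagger_def vec_lambda_beta GUHN_entry HN_eps c_def)
    done
  also have "\<dots> = (\<Sum>v\<in>UNIV. (c * c) * (chi S1 S2 v * eps (dot v (b1 + b2))))"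
    by (intro sum.cong refl) (simp add: chi_def dot_add_right eps_add c_def algebra_simps del: add_bit_eq_xor)
  also have "\<dots> = complex_of_real (2 powr (- real CARD('n))) * T S1 S2 (b1 + b2)"
    by (simp add: cc T_def sum_distrib_left)
  finally show ?thesis .
qed




lemma vec_add_swap: "((x::bit^'n) + y = z) \<longleftrightarrow> (x = y + z)"
proof
  assume h: "x + y = z"
  have "x = x + (y + y)" by simp
  also have "\<dots> = (x + y) + y" by (simp only: add.assoc)
  also have "\<dots> = y + z" by (simp only: h add.commute)
  finally show "x = y + z" .
next
  assume h: "x = y + z"
  have "x + y = z + (y + y)" by (simp only: h add.commute add.left_commute)
  then show "x + y = z" by simp
qed

lemma real_part:
  fixes t g :: real and k m r :: nat
  assumes t: "t^2 = 2^m * real k" and k: "real k * 2^r = 2^m" and g: "g = 2 powr (- real m) * t" and tpos: "t \<ge> 0"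
  shows "g = 2 powr (- real r / 2)"
proof -
  have k': "real k = 2^m / 2^r" using k by (simp add: field_simps)
  have "g^2 = (2 powr (- real m))^2 * (2^m * (2 ^ m / 2 ^ r))" using g t k' by (simp add: power_mult_distrib)
  also have "\<dots> = (1::real) / 2 ^ r"
    by (simp add: powr_minus power2_eq_square powr_realpow field_simps)
  also have "(1::real) / 2 ^ r = (2 powr (- real r / 2))^2"
    by (simp add: power2_eq_square powr_add[symmetric] powr_minus powr_realpow divide_simps)
  finally have "g^2 = (2 powr (- real r / 2))^2" .
  moreover have "g \<ge> 0" using g tpos by simp
  ultimately show ?thesis by (simp add: power2_eq_iff_nonneg)
qed

theorem corollary4:
  fixes S1 S2 :: "bit^'n^'n"
  assumes "transpose S1 = S1" and "transpose S2 = S2"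
  defines "G \<equiv> dagger (GU S1 ** HN) ** (GU S2 ** HN)"
      and "r \<equiv> rank (S1 + S2)"
      and "H \<equiv> vec.span (rows (S1 + S2))"
  shows "\<forall>b2. card {b1. G$b1$b2 \<noteq> 0} = 2 ^ r
           \<and> (\<forall>b1. G$b1$b2 \<noteq> 0 \<longrightarrow> norm (G$b1$b2) = 2 powr (- real r / 2))
           \<and> (\<exists>a. {b1. G$b1$b2 \<noteq> 0} = (\<lambda>h. a + h) ` H)"
proof
  fix b2
  let ?K = "{u. (S1 + S2) *v u = 0}"
  obtain c0 where c0: "T S1 S2 c0 \<noteq> 0" using T_exists by blast
  have HK: "perp ?K = H" unfolding H_def by (rule perp_kernel)
  have KH: "?K = perp H" unfolding H_def by (rule kernel_perp)
  have cardHK: "card H * card ?K = 2 ^ CARD('n)"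
    unfolding KH H_def by (rule card_perp) (auto intro: vec.span_zero vec.span_add)
  have cardH: "card H = 2 ^ r"
    unfolding H_def r_def row_rank_def_gen by (rule card_span_dim)
  have Kpos: "card ?K > 0"
    by (rule card_gt_0_iff[THEN iffD2]) (auto intro: exI[of _ 0])
  have Tn: "complex_of_real ((norm (T S1 S2 c))^2) = 2 ^ CARD('n) * (if c + c0 \<in> H then of_nat (card ?K) else 0)" for c
    using T_normsq2[OF assms(1,2) c0, of c] HK complex_norm_square[of "T S1 S2 c"] by simp
  have Tr: "(norm (T S1 S2 c))^2 = (if c + c0 \<in> H then 2 ^ CARD('n) * real (card ?K) else 0)" for c
  proof -
    have "complex_of_real ((norm (T S1 S2 c))^2) = complex_of_real (if c + c0 \<in> H then 2 ^ CARD('n) * real (card ?K) else 0)"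
      using Tn[of c] by simp
    then show ?thesis using of_real_eq_iff by blast
  qed
  have Tnz: "T S1 S2 c \<noteq> 0 \<longleftrightarrow> c + c0 \<in> H" for c
  proof -
    have "T S1 S2 c \<noteq> 0 \<longleftrightarrow> (norm (T S1 S2 c))^2 \<noteq> 0" by simp
    moreover have "\<exists>x. (S1 + S2) *v x = 0" by (rule exI[of _ 0]) simp
    ultimately show ?thesis using Tr[of c] Kpos by simp
  qed
  have Tnorm: "c + c0 \<in> H \<Longrightarrow> (norm (T S1 S2 c))^2 = 2 ^ CARD('n) * real (card ?K)" for c
    using Tr[of c] by simp
  have Gent: "G$b1$b2 = complex_of_real (2 powr (- real CARD('n))) * T S1 S2 (b1 + b2)" for b1
    unfolding G_def by (rule G_entry)
  have Gnz: "G$b1$b2 \<noteq> 0 \<longleftrightarrow> b1 + b2 + c0 \<in> H" for b1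
    using Gent[of b1] Tnz[of "b1 + b2"] by simp
  have N: "{b1. G$b1$b2 \<noteq> 0} = (\<lambda>h. (b2 + c0) + h) ` H"
  proof (intro set_eqI iffI)
    fix b1 assume "b1 \<in> {b1. G$b1$b2 \<noteq> 0}"
    then have "b1 + (b2 + c0) \<in> H" using Gnz by (simp add: add.assoc)
    then show "b1 \<in> (\<lambda>h. (b2 + c0) + h) ` H" using vec_add_swap by blast
  next
    fix b1 assume "b1 \<in> (\<lambda>h. (b2 + c0) + h) ` H"
    then obtain h where "h \<in> H" "b1 = (b2 + c0) + h" by auto
    then have "b1 + (b2 + c0) \<in> H" using vec_add_swap by metis
    then show "b1 \<in> {b1. G$b1$b2 \<noteq> 0}" using Gnz by (simp add: add.assoc)
  qed
  have "card {b1. G$b1$b2 \<noteq> 0} = 2 ^ r"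
    unfolding N by (subst card_image) (auto simp: inj_on_def cardH)
  moreover have "\<forall>b1. G$b1$b2 \<noteq> 0 \<longrightarrow> norm (G$b1$b2) = 2 powr (- real r / 2)"
  proof (intro allI impI)
    fix b1 assume "G$b1$b2 \<noteq> 0"
    then have inH: "b1 + b2 + c0 \<in> H" using Gnz by simp
    show "norm (G$b1$b2) = 2 powr (- real r / 2)"
    proof (rule real_part)
      show "(norm (T S1 S2 (b1 + b2)))^2 = 2 ^ CARD('n) * real (card ?K)" using Tnorm inH by simp
      show "real (card ?K) * 2 ^ r = 2 ^ CARD('n)"
        using cardHK cardH by (metis mult.commute of_nat_mult of_nat_numeral of_nat_power)
      show "norm (G$b1$b2) = 2 powr (- real CARD('n)) * norm (T S1 S2 (b1 + b2))"
        using Gent[of b1] by (simp add: norm_mult)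
    qed simp
  qed
  ultimately show "card {b1. G$b1$b2 \<noteq> 0} = 2 ^ r
           \<and> (\<forall>b1. G$b1$b2 \<noteq> 0 \<longrightarrow> norm (G$b1$b2) = 2 powr (- real r / 2))
           \<and> (\<exists>a. {b1. G$b1$b2 \<noteq> 0} = (\<lambda>h. a + h) ` H)" using N by blast
qed


end
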